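(* Let $T:l_\infty\to l_\infty$ be a continuous positive linear map with adjoint $T^*$. Then the set $\Delta(T^* )=\{p\in\Delta: p\text{ is an eigenvector of }T^*\}$ is nonempty and weak$^\star$-closed.
   Context: $l_\infty$: real bounded sequences indexed by $\mathbb N$ with sup norm. $ba(\mathbb N)$: norm dual of $l_\infty$ (bounded finitely additive signed measures on $2^{\mathbb N}$), pairing $\langle x,\mu\rangle$, weak$^\star$ topology. The adjoint $T^*:ba(\mathbb N)\to ba(\mathbb N)$ is defined by $\langle x,T^*(\mu)\rangle=\langle T(x),\mu\rangle$ for all $x,\mu$. $\Delta$ is the set of finitely additive probability measures on $2^{\mathbb N}$, i.e. $\mu\in ba(\mathbb N)$ with $\mu\ge0$ and $\mu(\mathbb N)=1$. An eigenvector of $T^*$ is a nonzero $\mu\in ba(\mathbb N)$ such that $T^*(\mu)=\lambda\mu$ for some $\lambda\in\mathbb R$. *)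

theory Defs
  imports "HOL-Analysis.Analysis"
begin

text \<open>l_infinity: bounded real sequences with sup norm, realised as bounded continuous
  functions on the discrete space nat.  Its norm dual ba(N) is the type of bounded
  linear functionals on it.\<close>

type_synonym linf = "nat \<Rightarrow>\<^sub>C real"
type_synonym ba = "linf \<Rightarrow>\<^sub>L real"

definition ind :: "nat set \<Rightarrow> linf" where
  "ind A = Bcontfun (indicator A)"

definition ba_measure :: "ba \<Rightarrow> nat set \<Rightarrow> real" where
  "ba_measure \<mu> A = blinfun_apply \<mu> (ind A)"

definition adjoint_op :: "(linf \<Rightarrow>\<^sub>L linf) \<Rightarrow> ba \<Rightarrow> ba" where
  "adjoint_op T \<mu> = \<mu> o\<^sub>L T"

definition positive_op :: "(linf \<Rightarrow>\<^sub>L linf) \<Rightarrow> bool" where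
  "positive_op T \<longleftrightarrow>
     (\<forall>x. (\<forall>n. 0 \<le> apply_bcontfun x n) \<longrightarrow> (\<forall>n. 0 \<le> apply_bcontfun (blinfun_apply T x) n))"

definition Delta :: "ba set" where
  "Delta = {\<mu>. (\<forall>A. 0 \<le> ba_measure \<mu> A) \<and> ba_measure \<mu> UNIV = 1}"

definition eigenvector_of :: "(ba \<Rightarrow> ba) \<Rightarrow> ba \<Rightarrow> bool" where
  "eigenvector_of S \<mu> \<longleftrightarrow> \<mu> \<noteq> 0 \<and> (\<exists>c::real. S \<mu> = c *\<^sub>R \<mu>)"

definition Delta_eig :: "(linf \<Rightarrow>\<^sub>L linf) \<Rightarrow> ba set" where
  "Delta_eig T = {p \<in> Delta. eigenvector_of (adjoint_op T) p}"

definition weak_star_topology :: "ba topology" where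
  "weak_star_topology =
     pullback_topology UNIV (\<lambda>\<mu> x. blinfun_apply \<mu> x) (product_topology (\<lambda>_. euclideanreal) UNIV)"

end

theory Submission
  imports Defs
begin

lemma topspace_ws [simp]: "topspace weak_star_topology = UNIV"
  by (simp add: weak_star_topology_def topspace_pullback_topology)

lemma cont_eval: "continuous_map weak_star_topology euclideanreal (\<lambda>p. blinfun_apply p x)"
proof -
  have "continuous_map weak_star_topology euclideanreal ((\<lambda>f. f x) \<circ> (\<lambda>\<mu> x. blinfun_apply \<mu> x))"
    unfolding weak_star_topology_def
    by (intro continuous_map_pullback continuous_map_product_projection) simp
  then show ?thesis by (simp add: o_def)
qed

lemma eig_char:
  "Delta_eig T = {p. (\<forall>A. 0 \<le> blinfun_apply p (ind A)) \<and> blinfun_apply p (ind UNIV) = 1 \<and>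
     (\<forall>x. blinfun_apply p (blinfun_apply T x) - blinfun_apply p (blinfun_apply T (ind UNIV)) * blinfun_apply p x = 0)}"
  (is "_ = ?R")
proof
  show "Delta_eig T \<subseteq> ?R"
  proof
    fix p assume "p \<in> Delta_eig T"
    then have D: "p \<in> Delta" and "eigenvector_of (adjoint_op T) p" by (auto simp: Delta_eig_def)
    then obtain c where c: "p o\<^sub>L T = c *\<^sub>R p" by (auto simp: eigenvector_of_def adjoint_op_def)
    have e: "blinfun_apply p (blinfun_apply T x) = c * blinfun_apply p x" for x
      using arg_cong[OF c, of "\<lambda>f. blinfun_apply f x"] by (simp add: scaleR_blinfun.rep_eq)
    from D have 1: "blinfun_apply p (ind UNIV) = 1" by (simp add: Delta_def ba_measure_def)
    have e1: "blinfun_apply p (blinfun_apply T (ind UNIV)) = c" using e[of "ind UNIV"] 1 by simp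
    show "p \<in> ?R" using D 1 unfolding mem_Collect_eq e1 by (simp add: Delta_def ba_measure_def e)
  qed
next
  show "?R \<subseteq> Delta_eig T"
  proof
    fix p assume p: "p \<in> ?R"
    define c where "c = blinfun_apply p (blinfun_apply T (ind UNIV))"
    have pos: "\<forall>A. 0 \<le> blinfun_apply p (ind A)" and one1: "blinfun_apply p (ind UNIV) = 1"
      using p by blast+
    have ev: "blinfun_apply p (blinfun_apply T x) = c * blinfun_apply p x" for x
    proof -
      have "blinfun_apply p (blinfun_apply T x) - c * blinfun_apply p x = 0"
        using p unfolding c_def by blast
      then show ?thesis by simp
    qed
    have "p o\<^sub>L T = c *\<^sub>R p"
      by (rule blinfun_eqI) (simp add: ev scaleR_blinfun.rep_eq)
    moreover have "p \<noteq> 0" using one1 by auto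
    ultimately have "eigenvector_of (adjoint_op T) p"
      by (auto simp: eigenvector_of_def adjoint_op_def)
    moreover have "p \<in> Delta" using pos one1 by (simp add: Delta_def ba_measure_def)
    ultimately show "p \<in> Delta_eig T" by (simp add: Delta_eig_def)
  qed
qed

lemma closed_part: "closedin weak_star_topology (Delta_eig T)"
proof -
  let ?W = weak_star_topology
  have c1: "closedin ?W {p. 0 \<le> blinfun_apply p (ind A)}" for A
    using closedin_continuous_map_preimage[OF cont_eval[of "ind A"], of "{0..}"] by simp
  have c2: "closedin ?W {p. blinfun_apply p (ind UNIV) = 1}"
    using closedin_continuous_map_preimage[OF cont_eval[of "ind UNIV"], of "{1}"] by simp
  have c3: "closedin ?W {p. blinfun_apply p (blinfun_apply T x) - blinfun_apply p (blinfun_apply T (ind UNIV)) * blinfun_apply p x = 0}" for x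
    using closedin_continuous_map_preimage[OF continuous_map_diff[OF cont_eval continuous_map_real_mult[OF cont_eval cont_eval]], of "{0}"]
    by simp
  have eq: "Delta_eig T = (\<Inter>A. {p. 0 \<le> blinfun_apply p (ind A)}) \<inter> {p. blinfun_apply p (ind UNIV) = 1} \<inter>
     (\<Inter>x. {p. blinfun_apply p (blinfun_apply T x) - blinfun_apply p (blinfun_apply T (ind UNIV)) * blinfun_apply p x = 0})"
    unfolding eig_char by auto
  show ?thesis unfolding eq
    by (intro closedin_Int closedin_INT c1 c2 c3) auto
qed


lemma ind_apply [simp]: "apply_bcontfun (ind A) n = indicator A n"
proof -
  have "(indicator A :: nat \<Rightarrow> real) \<in> bcontfun"
    by (rule bcontfun_normI[where b=1]) (auto simp: indicator_def)
  then show ?thesis by (simp add: ind_def Bcontfun_inverse)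
qed

definition one :: linf where "one = ind UNIV"

lemma one_apply [simp]: "apply_bcontfun one n = 1"
  by (simp add: one_def)

definition Pw :: "(linf \<Rightarrow>\<^sub>L linf) \<Rightarrow> nat \<Rightarrow> linf \<Rightarrow> linf" where
  "Pw T k = blinfun_apply T ^^ k"

lemma Pw_0 [simp]: "Pw T 0 x = x" by (simp add: Pw_def)
lemma Pw_Suc: "Pw T (Suc k) x = Pw T k (blinfun_apply T x)"
  unfolding Pw_def funpow_Suc_right by simp
lemma Pw_Suc': "Pw T (Suc k) x = blinfun_apply T (Pw T k x)"
  by (simp add: Pw_def)

lemma Pw_linear: "linear (Pw T k)"
proof (induction k)
  case 0 then show ?case by (simp add: Pw_def id_def[symmetric] linear_id)
next
  case (Suc k)
  have "Pw T (Suc k) = blinfun_apply T \<circ> Pw T k" by (auto simp: Pw_Suc')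
  then show ?case using linear_compose[OF Suc.IH bounded_linear.linear[OF blinfun.bounded_linear_right[of T]]] by (simp add: o_def)
qed

lemma Pw_add: "Pw T k (x + y) = Pw T k x + Pw T k y"
  using linear_add[OF Pw_linear] .
lemma Pw_diff: "Pw T k (x - y) = Pw T k x - Pw T k y"
  using linear_diff[OF Pw_linear] .
lemma Pw_scale: "Pw T k (c *\<^sub>R x) = c *\<^sub>R Pw T k x"
  using linear_scale[OF Pw_linear] .

definition nonneg :: "linf \<Rightarrow> bool" where "nonneg x \<longleftrightarrow> (\<forall>n. 0 \<le> apply_bcontfun x n)"

lemma Pw_pos: "positive_op T \<Longrightarrow> nonneg x \<Longrightarrow> nonneg (Pw T k x)"
proof (induction k)
  case 0 then show ?case by simp
next
  case (Suc k) then show ?case by (simp add: Pw_Suc' positive_op_def nonneg_def)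
qed

lemma Pw_mono: "positive_op T \<Longrightarrow> (\<And>n. apply_bcontfun x n \<le> apply_bcontfun y n) \<Longrightarrow>
   apply_bcontfun (Pw T k x) m \<le> apply_bcontfun (Pw T k y) m"
  using Pw_pos[of T "y - x" k] by (simp add: nonneg_def Pw_diff)

definition cc :: "(linf \<Rightarrow>\<^sub>L linf) \<Rightarrow> nat \<Rightarrow> nat \<Rightarrow> real" where
  "cc T k m = apply_bcontfun (Pw T k one) m"

lemma cc_nonneg: "positive_op T \<Longrightarrow> 0 \<le> cc T k m"
  using Pw_pos[of T one k] by (simp add: nonneg_def cc_def)

lemma cc_0 [simp]: "cc T 0 m = 1" by (simp add: cc_def)

lemma Pw_bound: "positive_op T \<Longrightarrow> \<bar>apply_bcontfun (Pw T k x) m\<bar> \<le> norm x * cc T k m"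
proof -
  assume pos: "positive_op T"
  have b: "\<bar>apply_bcontfun x n\<bar> \<le> norm x" for n using norm_bounded[of x n] by simp
  have "apply_bcontfun (Pw T k x) m \<le> apply_bcontfun (Pw T k (norm x *\<^sub>R one)) m"
    by (rule Pw_mono[OF pos]) (use b in \<open>simp add: abs_le_iff\<close>)
  moreover have "apply_bcontfun (Pw T k (- x)) m \<le> apply_bcontfun (Pw T k (norm x *\<^sub>R one)) m"
    by (rule Pw_mono[OF pos]) (use b in \<open>simp add: abs_le_iff\<close>)
  moreover have "Pw T k (- x) = - Pw T k x" using linear_neg[OF Pw_linear] .
  ultimately show ?thesis by (simp add: Pw_scale cc_def)
qed

lemma bcf_sum: "apply_bcontfun (sum f A) n = (\<Sum>a\<in>A. apply_bcontfun (f a) n)"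
  for f :: "'a \<Rightarrow> linf"
  by (induction A rule: infinite_finite_induct) auto


definition Ssum :: "(linf \<Rightarrow>\<^sub>L linf) \<Rightarrow> real \<Rightarrow> nat \<Rightarrow> nat \<Rightarrow> real" where
  "Ssum T \<mu> N m = (\<Sum>k<N. cc T k m / \<mu> ^ k)"

definition Bok :: "(linf \<Rightarrow>\<^sub>L linf) \<Rightarrow> real \<Rightarrow> bool" where
  "Bok T \<mu> \<longleftrightarrow> 0 < \<mu> \<and> (\<exists>M. \<forall>m N. Ssum T \<mu> N m \<le> M)"

definition rr :: "(linf \<Rightarrow>\<^sub>L linf) \<Rightarrow> real" where
  "rr T = Inf {\<mu>. Bok T \<mu>}"

lemma geom_le: "0 \<le> (q::real) \<Longrightarrow> q < 1 \<Longrightarrow> (\<Sum>k<N. q ^ k) \<le> 1 / (1 - q)"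
  by (simp add: sum_gp_strict divide_right_mono)

lemma T_one_le: "apply_bcontfun (blinfun_apply T x) n \<le> norm (blinfun_apply T x)"
  using norm_bounded[of "blinfun_apply T x" n] by simp

lemma cc_le_pow: "positive_op T \<Longrightarrow> cc T k m \<le> norm (blinfun_apply T one) ^ k"
proof (induction k arbitrary: m)
  case 0 then show ?case by simp
next
  case (Suc k)
  let ?a = "norm (blinfun_apply T one)"
  have "cc T (Suc k) m = apply_bcontfun (Pw T k (blinfun_apply T one)) m"
    by (simp add: cc_def Pw_Suc)
  also have "\<dots> \<le> apply_bcontfun (Pw T k (?a *\<^sub>R one)) m"
    by (rule Pw_mono[OF Suc.prems]) (simp add: T_one_le)
  also have "\<dots> = ?a * cc T k m" by (simp add: Pw_scale cc_def)
  also have "\<dots> \<le> ?a * ?a ^ k" using Suc by (simp add: mult_left_mono)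
  finally show ?case by simp
qed

lemma Bok_exists: "positive_op T \<Longrightarrow> Bok T (norm (blinfun_apply T one) + 1)"
proof -
  assume pos: "positive_op T"
  let ?a = "norm (blinfun_apply T one)"
  let ?q = "?a / (?a + 1)"
  have q1: "?q < 1" by (simp add: divide_less_eq_1 add_nonneg_pos)
  have "Ssum T (?a + 1) N m \<le> ?a + 1" for N m
  proof -
    have "Ssum T (?a + 1) N m \<le> (\<Sum>k<N. ?q ^ k)"
      unfolding Ssum_def power_divide
      by (intro sum_mono divide_right_mono cc_le_pow[OF pos]) auto
    also have "\<dots> \<le> 1 / (1 - ?q)" by (rule geom_le) (use q1 in auto)
    also have "1 / (1 - ?q) = ?a + 1"
    proof -
      have h: "?a + 1 \<noteq> 0" "1 + ?a \<noteq> 0" using norm_ge_zero[of "blinfun_apply T one"] by linarith+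
      have "1 - ?q = 1 / (?a + 1)" using h by (simp add: field_simps)
      then show ?thesis by simp
    qed
    finally show ?thesis .
  qed
  then show ?thesis unfolding Bok_def by (auto intro: add_nonneg_pos)
qed

lemma Bok_mono: "Bok T \<mu> \<Longrightarrow> \<mu> \<le> \<mu>' \<Longrightarrow> positive_op T \<Longrightarrow> Bok T \<mu>'"
proof -
  assume B: "Bok T \<mu>" and le: "\<mu> \<le> \<mu>'" and pos: "positive_op T"
  then obtain M where M: "\<And>m N. Ssum T \<mu> N m \<le> M" and mu: "0 < \<mu>" by (auto simp: Bok_def)
  have "Ssum T \<mu>' N m \<le> Ssum T \<mu> N m" for N m
    unfolding Ssum_def
    by (intro sum_mono divide_left_mono cc_nonneg[OF pos] power_mono mult_pos_pos zero_less_power)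
       (use le mu in auto)
  then show ?thesis using M mu le unfolding Bok_def by (meson order_trans order_less_le_trans)
qed

lemma rr_facts:
  assumes pos: "positive_op T"
  shows "0 \<le> rr T" "\<And>\<mu>. rr T < \<mu> \<Longrightarrow> Bok T \<mu>" "\<And>\<mu>. Bok T \<mu> \<Longrightarrow> rr T \<le> \<mu>"
proof -
  have ne: "{\<mu>. Bok T \<mu>} \<noteq> {}" using Bok_exists[OF pos] by auto
  have bdd: "bdd_below {\<mu>. Bok T \<mu>}" by (rule bdd_belowI[where m=0]) (auto simp: Bok_def)
  show "0 \<le> rr T" unfolding rr_def by (rule cInf_greatest[OF ne]) (auto simp: Bok_def)
  show "rr T \<le> \<mu>" if "Bok T \<mu>" for \<mu> unfolding rr_def by (rule cInf_lower) (use that bdd in auto)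
  show "Bok T \<mu>" if "rr T < \<mu>" for \<mu>
  proof -
    from that obtain \<mu>' where "Bok T \<mu>'" "\<mu>' < \<mu>"
      unfolding rr_def using cInf_less_iff[OF ne bdd] by auto
    then show ?thesis using Bok_mono[OF _ _ pos] by auto
  qed
qed

lemma Ssum_mono_N: "positive_op T \<Longrightarrow> 0 < \<mu> \<Longrightarrow> N \<le> N' \<Longrightarrow> Ssum T \<mu> N m \<le> Ssum T \<mu> N' m"
  unfolding Ssum_def
  by (rule sum_mono2) (auto simp: cc_nonneg)

lemma term_small:
  assumes pos: "positive_op T" and B: "Bok T \<mu>"
  shows "\<exists>N'\<ge>N. cc T N' m / \<mu> ^ N' \<le> 1"
proof (rule ccontr)
  assume "\<not> ?thesis"
  then have big: "\<And>k. N \<le> k \<Longrightarrow> 1 < cc T k m / \<mu> ^ k" by force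
  from B obtain M where M: "\<And>m N. Ssum T \<mu> N m \<le> M" and mu: "0 < \<mu>" by (auto simp: Bok_def)
  define K where "K = nat \<lceil>M\<rceil> + 1"
  have "real K \<le> (\<Sum>k\<in>{N..<N+K}. cc T k m / \<mu> ^ k)"
  proof -
    have "(\<Sum>k\<in>{N..<N+K}. (1::real)) \<le> (\<Sum>k\<in>{N..<N+K}. cc T k m / \<mu> ^ k)"
      by (rule sum_mono) (use big in \<open>auto intro: less_imp_le\<close>)
    then show ?thesis by simp
  qed
  also have "\<dots> \<le> Ssum T \<mu> (N+K) m"
    unfolding Ssum_def by (rule sum_mono2) (auto intro!: divide_nonneg_pos cc_nonneg[OF pos] simp: mu)
  also have "\<dots> \<le> M" by (rule M)
  finally have "real K \<le> M" .
  moreover have "M < real K" unfolding K_def by linarith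
  ultimately show False by simp
qed


definition Wv :: "(linf \<Rightarrow>\<^sub>L linf) \<Rightarrow> real \<Rightarrow> nat \<Rightarrow> linf" where
  "Wv T r N = (\<Sum>k<N. (1 / r ^ k) *\<^sub>R Pw T k one)"

lemma Wv_apply: "apply_bcontfun (Wv T r N) n = Ssum T r N n"
  by (simp add: Wv_def Ssum_def bcf_sum cc_def)

lemma TWv_apply:
  assumes "r \<noteq> 0"
  shows "apply_bcontfun (blinfun_apply T (Wv T r N)) n = r * (Ssum T r (Suc N) n - 1)"
proof -
  have lin: "linear (blinfun_apply T)" by (rule bounded_linear.linear[OF blinfun.bounded_linear_right])
  have "blinfun_apply T (Wv T r N) = (\<Sum>k<N. (1 / r ^ k) *\<^sub>R Pw T (Suc k) one)"
    unfolding Wv_def by (simp add: linear_sum[OF lin] linear_scale[OF lin] Pw_Suc')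
  then have "apply_bcontfun (blinfun_apply T (Wv T r N)) n = (\<Sum>k<N. cc T (Suc k) n / r ^ k)"
    by (simp add: bcf_sum cc_def)
  also have "\<dots> = r * (\<Sum>k<N. cc T (Suc k) n / r ^ Suc k)"
    unfolding sum_distrib_left by (rule sum.cong) (use assms in auto)
  also have "\<dots> = r * (Ssum T r (Suc N) n - 1)"
    unfolding Ssum_def sum.lessThan_Suc_shift by simp
  finally show ?thesis .
qed

lemma Wv_1: "Wv T r (Suc 0) = one"
  by (simp add: Wv_def)

lemma blowup_pos:
  assumes pos: "positive_op T" and r0: "0 < rr T"
    and bnd: "\<And>m N. Ssum T (rr T) N m \<le> M"
  shows False
proof -
  define r where "r = rr T"
  define M' where "M' = max M 1"
  have M'1: "1 \<le> M'" by (simp add: M'_def)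
  have bnd': "Ssum T r N m \<le> M'" for N m using bnd[of N m] by (simp add: M'_def r_def)
  define q where "q = r * (1 - 1 / M')"
  have rpos: "0 < r" using r0 by (simp add: r_def)
  have q0: "0 \<le> q" using M'1 rpos by (simp add: q_def)
  have qr: "q < r" using M'1 rpos by (simp add: q_def)
  have step: "apply_bcontfun (blinfun_apply T (Wv T r N)) n \<le> apply_bcontfun (q *\<^sub>R Wv T r (Suc N)) n" for N n
  proof -
    let ?S = "Ssum T r (Suc N) n"
    have "?S \<le> M'" by (rule bnd')
    then have "?S / M' \<le> 1" using M'1 by simp
    then have "r * (?S - 1) \<le> r * (?S - ?S / M')" using rpos by (intro mult_left_mono) auto
    also have "\<dots> = q * ?S" by (simp add: q_def algebra_simps)
    finally show ?thesis using TWv_apply[of r T N n] rpos by (simp add: Wv_apply)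
  qed
  have key: "apply_bcontfun (Pw T j (Wv T r N)) m \<le> q ^ j * Ssum T r (N + j) m" for j N m
  proof (induction j arbitrary: N m)
    case 0 then show ?case by (simp add: Wv_apply)
  next
    case (Suc j)
    have "apply_bcontfun (Pw T (Suc j) (Wv T r N)) m = apply_bcontfun (Pw T j (blinfun_apply T (Wv T r N))) m"
      by (simp add: Pw_Suc)
    also have "\<dots> \<le> apply_bcontfun (Pw T j (q *\<^sub>R Wv T r (Suc N))) m"
      by (rule Pw_mono[OF pos step])
    also have "\<dots> = q * apply_bcontfun (Pw T j (Wv T r (Suc N))) m" by (simp add: Pw_scale)
    also have "\<dots> \<le> q * (q ^ j * Ssum T r (Suc N + j) m)"
      by (rule mult_left_mono[OF Suc.IH q0])
    finally show ?case by simp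
  qed
  have ccb: "cc T j m \<le> M' * q ^ j" for j m
  proof -
    have "cc T j m = apply_bcontfun (Pw T j (Wv T r (Suc 0))) m" by (simp add: Wv_1 cc_def)
    also have "\<dots> \<le> q ^ j * Ssum T r (Suc 0 + j) m" by (rule key)
    also have "\<dots> \<le> q ^ j * M'" by (rule mult_left_mono[OF bnd']) (use q0 in simp)
    finally show ?thesis by (simp add: mult.commute)
  qed
  define \<rho> where "\<rho> = (q + r) / 2"
  have rho0: "0 < \<rho>" using q0 rpos by (simp add: \<rho>_def)
  have rhor: "\<rho> < r" using qr by (simp add: \<rho>_def)
  have qrho0: "0 \<le> q / \<rho>" using q0 rho0 by simp
  have qrho1: "q / \<rho> < 1" using qr q0 rho0 by (simp add: \<rho>_def divide_less_eq_1)
  have "Ssum T \<rho> N m \<le> M' / (1 - q / \<rho>)" for N m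
  proof -
    have "Ssum T \<rho> N m \<le> (\<Sum>k<N. M' * (q / \<rho>) ^ k)"
      unfolding Ssum_def power_divide
      by (intro sum_mono) (use ccb rho0 in \<open>auto simp: divide_right_mono\<close>)
    also have "\<dots> = M' * (\<Sum>k<N. (q / \<rho>) ^ k)" by (simp add: sum_distrib_left)
    also have "\<dots> \<le> M' * (1 / (1 - q / \<rho>))"
      by (rule mult_left_mono[OF geom_le[OF qrho0 qrho1]]) (use M'1 in simp)
    finally show ?thesis by simp
  qed
  then have "Bok T \<rho>" using rho0 unfolding Bok_def by blast
  then have "r \<le> \<rho>" using rr_facts(3)[OF pos] by (simp add: r_def)
  then show False using rhor by simp
qed

lemma blowup:
  assumes pos: "positive_op T" and nz: "apply_bcontfun (blinfun_apply T one) m0 \<noteq> 0" and d: "0 < \<delta>"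
  shows "\<exists>\<mu> m N. rr T < \<mu> \<and> \<mu> < rr T + \<delta> \<and> M \<le> Ssum T \<mu> N m"
proof (rule ccontr)
  assume "\<not> ?thesis"
  then have H: "\<And>\<mu> m N. rr T < \<mu> \<Longrightarrow> \<mu> < rr T + \<delta> \<Longrightarrow> Ssum T \<mu> N m < M" using not_le by blast
  have r0: "0 \<le> rr T" by (rule rr_facts(1)[OF pos])
  show False
  proof (cases "rr T = 0")
    case True
    define c where "c = cc T 1 m0"
    have cdef: "c = apply_bcontfun (blinfun_apply T one) m0" by (simp add: c_def cc_def Pw_Suc')
    have c0: "0 < c" using cc_nonneg[OF pos, of 1 m0] nz cdef by (simp add: c_def)
    define M' where "M' = max M 1"
    have M'1: "1 \<le> M'" by (simp add: M'_def)
    define \<mu> where "\<mu> = min (\<delta>/2) (c / (2 * M'))"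
    have mu0: "0 < \<mu>" using d c0 M'1 by (simp add: \<mu>_def)
    have mud: "\<mu> < \<delta>" using d by (simp add: \<mu>_def)
    have "c / (2 * M') \<ge> \<mu>" by (simp add: \<mu>_def)
    then have "2 * M' \<le> c / \<mu>" using mu0 M'1 c0 by (simp add: field_simps)
    moreover have "Ssum T \<mu> 2 m0 = 1 + c / \<mu>" by (simp add: Ssum_def numeral_2_eq_2 c_def)
    ultimately have "M \<le> Ssum T \<mu> 2 m0" using M'1 by (simp add: M'_def)
    moreover have "Ssum T \<mu> 2 m0 < M" using H[of \<mu> 2 m0] True mu0 mud by simp
    ultimately show False by simp
  next
    case False
    then have rpos: "0 < rr T" using r0 by simp
    have "Ssum T (rr T) N m \<le> M" for N m
    proof -
      have lim: "((\<lambda>\<mu>. Ssum T \<mu> N m) \<longlongrightarrow> Ssum T (rr T) N m) (at_right (rr T))"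
        unfolding Ssum_def using rpos by (auto intro!: tendsto_intros)
      have ev: "eventually (\<lambda>\<mu>. Ssum T \<mu> N m \<le> M) (at_right (rr T))"
        using eventually_at_right_real[of "rr T" "rr T + \<delta>"] d
        by (auto elim!: eventually_mono intro: less_imp_le H)
      show ?thesis by (rule tendsto_upperbound[OF lim ev]) simp
    qed
    then show False by (rule blowup_pos[OF pos rpos])
  qed
qed


lemma cluster:
  fixes g :: "nat \<Rightarrow> linf \<Rightarrow> real"
  assumes gb: "\<And>j x. \<bar>g j x\<bar> \<le> norm x"
  shows "\<exists>\<phi>. (\<forall>x. \<bar>\<phi> x\<bar> \<le> norm x) \<and>
     (\<forall>N \<eta> a b c. 0 < \<eta> \<longrightarrow> (\<exists>j\<ge>N. \<bar>g j a - \<phi> a\<bar> < \<eta> \<and> \<bar>g j b - \<phi> b\<bar> < \<eta> \<and> \<bar>g j c - \<phi> c\<bar> < \<eta>))"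
proof -
  define Pt where "Pt = product_topology (\<lambda>_. euclideanreal) (UNIV :: linf set)"
  define K where "K = PiE (UNIV :: linf set) (\<lambda>x. {-norm x..norm x})"
  define C where "C N = Pt closure_of (g ` {N..})" for N
  have tsp: "topspace Pt = UNIV" by (simp add: Pt_def)
  have gK: "g j \<in> K" for j
  proof -
    have "g j x \<in> {-norm x..norm x}" for x using gb[of j x] by (simp add: abs_le_iff)
    then show ?thesis by (simp add: K_def PiE_iff)
  qed
  have cK: "compactin Pt K" unfolding Pt_def K_def by (simp add: compactin_PiE)
  have gC: "g j \<in> C N" if "N \<le> j" for j N
  proof -
    have "g ` {N..} \<subseteq> C N" unfolding C_def by (rule closure_of_subset) (simp add: tsp)
    then show ?thesis using that by auto
  qed
  have fip: "\<And>\<U>. (\<forall>C\<in>\<U>. closedin Pt C) \<and> (\<forall>\<F>. finite \<F> \<and> \<F> \<subseteq> \<U> \<longrightarrow> K \<inter> \<Inter>\<F> \<noteq> {}) \<Longrightarrow> K \<inter> \<Inter>\<U> \<noteq> {}"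
    using cK unfolding compactin_fip by blast
  have "K \<inter> \<Inter>(range C) \<noteq> {}"
  proof (rule fip, intro conjI allI impI ballI)
    fix U assume "U \<in> range C"
    then show "closedin Pt U" by (auto simp: C_def)
  next
    fix F assume F: "finite F \<and> F \<subseteq> range C"
    obtain I where I: "finite I" "F = C ` I" using finite_subset_image[of F C UNIV] F by auto
    then obtain N0 where N0: "\<forall>i\<in>I. i \<le> N0" using finite_nat_set_iff_bounded_le by auto
    have "g N0 \<in> \<Inter>F" using gC N0 I by auto
    then show "K \<inter> \<Inter>F \<noteq> {}" using gK[of N0] by blast
  qed
  then obtain \<phi> where phiK: "\<phi> \<in> K" and phiC: "\<And>N. \<phi> \<in> C N" by blast
  have opn: "openin Pt {\<psi>. \<psi> a \<in> ball (\<phi> a) \<eta>}" for a \<eta>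
    using openin_continuous_map_preimage[OF continuous_map_product_projection[of a UNIV "\<lambda>_. euclideanreal"], of "ball (\<phi> a) \<eta>"]
    by (simp add: Pt_def)
  have near: "\<exists>j\<ge>N. \<bar>g j a - \<phi> a\<bar> < \<eta> \<and> \<bar>g j b - \<phi> b\<bar> < \<eta> \<and> \<bar>g j c - \<phi> c\<bar> < \<eta>"
    if "0 < \<eta>" for N \<eta> a b c
  proof -
    let ?U = "{\<psi>. \<psi> a \<in> ball (\<phi> a) \<eta>} \<inter> {\<psi>. \<psi> b \<in> ball (\<phi> b) \<eta>} \<inter> {\<psi>. \<psi> c \<in> ball (\<phi> c) \<eta>}"
    have A: "openin Pt ?U" by (intro openin_Int opn)
    have B: "\<phi> \<in> ?U" using that by simp
    have Cl: "\<forall>T. \<phi> \<in> T \<and> openin Pt T \<longrightarrow> (\<exists>y. y \<in> g ` {N..} \<and> y \<in> T)"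
      using phiC[of N] unfolding C_def in_closure_of by (elim conjE)
    have "\<exists>y. y \<in> g ` {N..} \<and> y \<in> ?U" using Cl[rule_format, OF conjI[OF B A]] .
    then obtain y where "y \<in> g ` {N..}" "y \<in> ?U" by (elim exE conjE)
    then obtain j where "j \<ge> N" "y = g j" by auto
    then show ?thesis using \<open>y \<in> ?U\<close> by (auto simp: dist_real_def abs_minus_commute)
  qed
  have phib: "\<bar>\<phi> x\<bar> \<le> norm x" for x
  proof -
    have "\<phi> x \<in> {-norm x..norm x}" using phiK by (simp add: K_def PiE_iff)
    then show ?thesis by (simp add: abs_le_iff)
  qed
  show ?thesis
    by (rule exI[of _ \<phi>]) (use phib near in blast)
qed

definition Fs :: "(linf \<Rightarrow>\<^sub>L linf) \<Rightarrow> real \<Rightarrow> nat \<Rightarrow> nat \<Rightarrow> linf \<Rightarrow> real" where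
  "Fs T \<mu> N m x = (\<Sum>k<N. apply_bcontfun (Pw T k x) m / \<mu> ^ k)"

lemma Fs_add: "Fs T \<mu> N m (x + y) = Fs T \<mu> N m x + Fs T \<mu> N m y"
  by (simp add: Fs_def Pw_add add_divide_distrib sum.distrib)

lemma Fs_scale: "Fs T \<mu> N m (c *\<^sub>R x) = c * Fs T \<mu> N m x"
  by (simp add: Fs_def Pw_scale sum_distrib_left)

lemma Fs_one: "Fs T \<mu> N m one = Ssum T \<mu> N m"
  by (simp add: Fs_def Ssum_def cc_def)

lemma Fs_nonneg: "positive_op T \<Longrightarrow> 0 < \<mu> \<Longrightarrow> nonneg x \<Longrightarrow> 0 \<le> Fs T \<mu> N m x"
  unfolding Fs_def using Pw_pos[of T x] by (auto intro!: sum_nonneg divide_nonneg_pos simp: nonneg_def)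

lemma Fs_bound: "positive_op T \<Longrightarrow> 0 < \<mu> \<Longrightarrow> \<bar>Fs T \<mu> N m x\<bar> \<le> norm x * Ssum T \<mu> N m"
proof -
  assume pos: "positive_op T" and mu: "0 < \<mu>"
  have "\<bar>Fs T \<mu> N m x\<bar> \<le> (\<Sum>k<N. \<bar>apply_bcontfun (Pw T k x) m / \<mu> ^ k\<bar>)"
    unfolding Fs_def by (rule sum_abs)
  also have "\<dots> \<le> (\<Sum>k<N. norm x * (cc T k m / \<mu> ^ k))"
    by (rule sum_mono) (use Pw_bound[OF pos] mu in \<open>auto simp: abs_div divide_right_mono\<close>)
  also have "\<dots> = norm x * Ssum T \<mu> N m" by (simp add: Ssum_def sum_distrib_left)
  finally show ?thesis .
qed

lemma Fs_T: "0 < \<mu> \<Longrightarrow> Fs T \<mu> N m (blinfun_apply T x) =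
   \<mu> * (Fs T \<mu> N m x + apply_bcontfun (Pw T N x) m / \<mu> ^ N - apply_bcontfun x m)"
proof -
  assume mu: "0 < \<mu>"
  have a: "Fs T \<mu> (Suc N) m x = apply_bcontfun x m + (\<Sum>k<N. apply_bcontfun (Pw T (Suc k) x) m / \<mu> ^ Suc k)"
    unfolding Fs_def sum.lessThan_Suc_shift by simp
  have b: "Fs T \<mu> (Suc N) m x = Fs T \<mu> N m x + apply_bcontfun (Pw T N x) m / \<mu> ^ N"
    unfolding Fs_def by simp
  have "Fs T \<mu> N m (blinfun_apply T x) = (\<Sum>k<N. apply_bcontfun (Pw T (Suc k) x) m / \<mu> ^ k)"
    by (simp add: Fs_def Pw_Suc)
  also have "\<dots> = \<mu> * (\<Sum>k<N. apply_bcontfun (Pw T (Suc k) x) m / \<mu> ^ Suc k)"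
    unfolding sum_distrib_left by (rule sum.cong) (use mu in auto)
  finally show ?thesis using a b by simp
qed

lemma Fs_err: "positive_op T \<Longrightarrow> 0 < \<mu> \<Longrightarrow> cc T N m / \<mu> ^ N \<le> 1 \<Longrightarrow>
   \<bar>Fs T \<mu> N m (blinfun_apply T x) - \<mu> * Fs T \<mu> N m x\<bar> \<le> 2 * \<mu> * norm x"
proof -
  assume pos: "positive_op T" and mu: "0 < \<mu>" and c: "cc T N m / \<mu> ^ N \<le> 1"
  have e: "Fs T \<mu> N m (blinfun_apply T x) - \<mu> * Fs T \<mu> N m x =
     \<mu> * (apply_bcontfun (Pw T N x) m / \<mu> ^ N - apply_bcontfun x m)"
    using Fs_T[OF mu] by (simp add: algebra_simps)
  have "\<bar>apply_bcontfun (Pw T N x) m / \<mu> ^ N\<bar> \<le> norm x * (cc T N m / \<mu> ^ N)"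
    using Pw_bound[OF pos, of N x m] mu by (simp add: abs_div divide_right_mono)
  also have "\<dots> \<le> norm x" using c mult_left_mono[OF c norm_ge_zero[of x]] by simp
  finally have h1: "\<bar>apply_bcontfun (Pw T N x) m / \<mu> ^ N\<bar> \<le> norm x" .
  have h2: "\<bar>apply_bcontfun x m\<bar> \<le> norm x" using norm_bounded[of x m] by simp
  have "\<bar>apply_bcontfun (Pw T N x) m / \<mu> ^ N - apply_bcontfun x m\<bar> \<le> 2 * norm x"
    using h1 h2 by linarith
  then show ?thesis unfolding e abs_mult using mu
    by (simp add: mult.assoc mult_left_mono)
qed

lemma zero_if_small: "(\<And>e. 0 < e \<Longrightarrow> \<bar>d::real\<bar> \<le> e) \<Longrightarrow> d = 0"
proof (rule ccontr)
  assume h: "\<And>e. 0 < e \<Longrightarrow> \<bar>d\<bar> \<le> e" and "d \<noteq> 0"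
  then have p: "0 < \<bar>d\<bar>" by simp
  then have "\<bar>d\<bar> \<le> \<bar>d\<bar> / 2" using h[of "\<bar>d\<bar> / 2"] by simp
  then show False using p by linarith
qed


lemma abs_apply_le: "\<bar>apply_bcontfun (x::linf) n\<bar> \<le> norm x"
  using norm_bounded[of x n] by simp

lemma state_to_eig:
  fixes \<phi> :: "linf \<Rightarrow> real"
  assumes bl: "bounded_linear \<phi>" and nn: "\<And>x. nonneg x \<Longrightarrow> 0 \<le> \<phi> x" and o: "\<phi> one = 1"
    and ev: "\<And>x. \<phi> (blinfun_apply T x) = c * \<phi> x"
  shows "Delta_eig T \<noteq> {}"
proof -
  define p :: ba where "p = Blinfun \<phi>"
  have pa: "blinfun_apply p = \<phi>" by (simp add: p_def bounded_linear_Blinfun_apply[OF bl])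
  have "p \<in> Delta_eig T"
    unfolding eig_char using nn o ev[of one] ev
    by (auto simp: pa nonneg_def one_def indicator_def)
  then show ?thesis by blast
qed

lemma case_zero:
  assumes pos: "positive_op T" and z: "\<And>n. apply_bcontfun (blinfun_apply T one) n = 0"
  shows "Delta_eig T \<noteq> {}"
proof -
  have bl: "bounded_linear (\<lambda>x::linf. apply_bcontfun x 0)"
    by (rule bounded_linear_intro[where K=1]) (auto simp: abs_apply_le)
  have "apply_bcontfun (blinfun_apply T x) 0 = 0" for x
  proof -
    have "\<bar>apply_bcontfun (Pw T 1 x) 0\<bar> \<le> norm x * cc T 1 0" by (rule Pw_bound[OF pos])
    moreover have "cc T 1 0 = 0" using z by (simp add: cc_def Pw_Suc')
    ultimately show ?thesis by (simp add: Pw_Suc')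
  qed
  then show ?thesis
    by (intro state_to_eig[OF bl, where c=0]) (auto simp: nonneg_def)
qed

lemma case_nz:
  assumes pos: "positive_op T" and nz: "apply_bcontfun (blinfun_apply T one) m0 \<noteq> 0"
  shows "Delta_eig T \<noteq> {}"
proof -
  define r where "r = rr T"
  have r0: "0 \<le> r" using rr_facts(1)[OF pos] by (simp add: r_def)
  define Q where "Q j t = (case t of (\<mu>, N, m) \<Rightarrow> r < \<mu> \<and> \<mu> < r + 1 / (real j + 1) \<and> real j + 1 \<le> Ssum T \<mu> N m \<and> cc T N m / \<mu> ^ N \<le> 1)" for j t
  have ex: "\<exists>t. Q j t" for j
  proof -
    obtain \<mu> m N0 where mu: "r < \<mu>" "\<mu> < r + 1 / (real j + 1)" and S: "real j + 1 \<le> Ssum T \<mu> N0 m"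
      using blowup[OF pos nz, of "1 / (real j + 1)" "real j + 1"] by (auto simp: r_def)
    have B: "Bok T \<mu>" using rr_facts(2)[OF pos] mu by (simp add: r_def)
    have mu0: "0 < \<mu>" using mu r0 by simp
    obtain N where N: "N \<ge> N0" "cc T N m / \<mu> ^ N \<le> 1" using term_small[OF pos B] by blast
    have "real j + 1 \<le> Ssum T \<mu> N m" using S Ssum_mono_N[OF pos mu0 N(1), of m] by simp
    then show ?thesis using mu N unfolding Q_def by (intro exI[of _ "(\<mu>, N, m)"]) simp
  qed
  obtain t where t: "\<And>j. Q j (t j)"
    using choice[of Q] ex by blast
  define mu where "mu j = fst (t j)" for j
  define Nn where "Nn j = fst (snd (t j))" for j
  define mm where "mm j = snd (snd (t j))" for j
  have sel: "r < mu j \<and> mu j < r + 1 / (real j + 1) \<and>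
      real j + 1 \<le> Ssum T (mu j) (Nn j) (mm j) \<and> cc T (Nn j) (mm j) / mu j ^ Nn j \<le> 1" for j
    using t[of j] unfolding mu_def Nn_def mm_def Q_def by (auto split: prod.splits)
  define S where "S j = Ssum T (mu j) (Nn j) (mm j)" for j
  define g where "g j x = Fs T (mu j) (Nn j) (mm j) x / S j" for j x
  have mu0: "0 < mu j" for j using sel[of j] r0 by linarith
  have Spos: "real j + 1 \<le> S j" for j using sel[of j] by (simp add: S_def)
  have Sp: "0 < S j" for j using Spos[of j] of_nat_0_le_iff[of j] by linarith
  have gadd: "g j (x + y) = g j x + g j y" for j x y by (simp add: g_def Fs_add add_divide_distrib)
  have gscale: "g j (c *\<^sub>R x) = c * g j x" for j c x by (simp add: g_def Fs_scale)
  have gnn: "0 \<le> g j x" if "nonneg x" for j x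
  proof -
    have "0 \<le> Fs T (mu j) (Nn j) (mm j) x" by (rule Fs_nonneg[OF pos mu0 that])
    then show ?thesis using Sp[of j] by (simp add: g_def)
  qed
  have gone: "g j one = 1" for j using Sp[of j] by (simp add: g_def Fs_one S_def)
  have gb: "\<bar>g j x\<bar> \<le> norm x" for j x
  proof -
    have "\<bar>Fs T (mu j) (Nn j) (mm j) x\<bar> \<le> norm x * S j" using Fs_bound[OF pos mu0] by (simp add: S_def)
    then show ?thesis using Sp[of j] by (simp add: g_def abs_div pos_divide_le_eq)
  qed
  have gT: "\<bar>g j (blinfun_apply T x) - mu j * g j x\<bar> \<le> 2 * mu j * norm x / (real j + 1)" for j x
  proof -
    have "\<bar>Fs T (mu j) (Nn j) (mm j) (blinfun_apply T x) - mu j * Fs T (mu j) (Nn j) (mm j) x\<bar> \<le> 2 * mu j * norm x"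
      using Fs_err[OF pos mu0] sel[of j] by blast
    moreover have "g j (blinfun_apply T x) - mu j * g j x =
      (Fs T (mu j) (Nn j) (mm j) (blinfun_apply T x) - mu j * Fs T (mu j) (Nn j) (mm j) x) / S j"
      by (simp add: g_def diff_divide_distrib)
    ultimately have "\<bar>g j (blinfun_apply T x) - mu j * g j x\<bar> \<le> 2 * mu j * norm x / S j"
      using Sp[of j] by (simp add: abs_div divide_right_mono)
    also have "\<dots> \<le> 2 * mu j * norm x / (real j + 1)"
      by (rule divide_left_mono) (use Spos[of j] mu0[of j] in auto)
    finally show ?thesis .
  qed
  obtain \<phi> where phib: "\<And>x. \<bar>\<phi> x\<bar> \<le> norm x" and
    near: "\<And>N \<eta> a b c. 0 < \<eta> \<Longrightarrow> \<exists>j\<ge>N. \<bar>g j a - \<phi> a\<bar> < \<eta> \<and> \<bar>g j b - \<phi> b\<bar> < \<eta> \<and> \<bar>g j c - \<phi> c\<bar> < \<eta>"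
    using cluster[of g, OF gb] by blast
  have padd: "\<phi> (x + y) = \<phi> x + \<phi> y" for x y
  proof -
    have "\<phi> (x + y) - \<phi> x - \<phi> y = 0"
    proof (rule zero_if_small)
      fix e :: real assume e: "0 < e"
      obtain j where "\<bar>g j x - \<phi> x\<bar> < e/3" "\<bar>g j y - \<phi> y\<bar> < e/3" "\<bar>g j (x+y) - \<phi> (x+y)\<bar> < e/3"
        using near[of "e/3" 0 x y "x+y"] e by auto
      then show "\<bar>\<phi> (x + y) - \<phi> x - \<phi> y\<bar> \<le> e" using gadd[of j x y] by linarith
    qed
    then show ?thesis by simp
  qed
  have pscale: "\<phi> (c *\<^sub>R x) = c * \<phi> x" for c x
  proof -
    have "\<phi> (c *\<^sub>R x) - c * \<phi> x = 0"
    proof (rule zero_if_small)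
      fix e :: real assume e: "0 < e"
      define \<eta> where "\<eta> = e / (1 + \<bar>c\<bar>)"
      have eta: "0 < \<eta>" using e by (simp add: \<eta>_def add_pos_nonneg)
      obtain j where j1: "\<bar>g j x - \<phi> x\<bar> < \<eta>" and j2: "\<bar>g j (c *\<^sub>R x) - \<phi> (c *\<^sub>R x)\<bar> < \<eta>"
        using near[OF eta, of 0 x "c *\<^sub>R x" x] by auto
      have "\<bar>c * g j x - c * \<phi> x\<bar> \<le> \<bar>c\<bar> * \<eta>"
        using j1 by (simp add: right_diff_distrib[symmetric] abs_mult mult_left_mono)
      then have "\<bar>\<phi> (c *\<^sub>R x) - c * \<phi> x\<bar> \<le> \<eta> + \<bar>c\<bar> * \<eta>" using j2 gscale[of j c x] by linarith
      also have "\<dots> = \<eta> * (1 + \<bar>c\<bar>)" by (simp add: algebra_simps)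
      also have "\<dots> = e"
      proof -
        have ne: "1 + \<bar>c\<bar> \<noteq> 0" using abs_ge_zero[of c] by linarith
        show ?thesis using ne by (simp add: \<eta>_def)
      qed
      finally show "\<bar>\<phi> (c *\<^sub>R x) - c * \<phi> x\<bar> \<le> e" .
    qed
    then show ?thesis by simp
  qed
  have bl: "bounded_linear \<phi>"
  proof (rule bounded_linear_intro[where K=1])
    fix x y show "\<phi> (x + y) = \<phi> x + \<phi> y" by (rule padd)
  next
    fix c x show "\<phi> (c *\<^sub>R x) = c *\<^sub>R \<phi> x" using pscale[of c x] by simp
  next
    fix x show "norm (\<phi> x) \<le> norm x * 1" using phib[of x] by simp
  qed
  have pnn: "0 \<le> \<phi> x" if "nonneg x" for x
  proof (rule ccontr)
    assume "\<not> 0 \<le> \<phi> x"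
    then have "0 < - \<phi> x" by simp
    then obtain j where "\<bar>g j x - \<phi> x\<bar> < - \<phi> x" using near[of "- \<phi> x" 0 x x x] by auto
    then show False using gnn[OF that, of j] by linarith
  qed
  have pone: "\<phi> one = 1"
  proof -
    have "\<phi> one - 1 = 0"
    proof (rule zero_if_small)
      fix e :: real assume "0 < e"
      then obtain j where "\<bar>g j one - \<phi> one\<bar> < e" using near[of e 0 one one one] by auto
      then show "\<bar>\<phi> one - 1\<bar> \<le> e" using gone[of j] by linarith
    qed
    then show ?thesis by simp
  qed
  have pev: "\<phi> (blinfun_apply T x) = r * \<phi> x" for x
  proof -
    have "\<phi> (blinfun_apply T x) - r * \<phi> x = 0"
    proof (rule zero_if_small)
      fix e :: real assume e: "0 < e"
      define \<eta> where "\<eta> = e / (2 * (1 + r))"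
      have eta: "0 < \<eta>" using e r0 by (simp add: \<eta>_def)
      define K where "K = (2 * r + 3) * norm x"
      have K0: "0 \<le> K" using r0 by (simp add: K_def)
      obtain N :: nat where N: "2 * K / e < real N" using reals_Archimedean2 by blast
      obtain j where jN: "j \<ge> N" and j1: "\<bar>g j x - \<phi> x\<bar> < \<eta>"
        and j2: "\<bar>g j (blinfun_apply T x) - \<phi> (blinfun_apply T x)\<bar> < \<eta>"
        using near[OF eta, of N x "blinfun_apply T x" x] by auto
      have mj: "r < mu j" "mu j < r + 1 / (real j + 1)" using sel[of j] by auto
      have j0: "0 < real j + 1" by simp
      have inv1: "1 / (real j + 1) \<le> 1" by simp
      have t1: "\<bar>g j (blinfun_apply T x) - mu j * g j x\<bar> \<le> 2 * (r + 1) * norm x / (real j + 1)"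
      proof -
        have "mu j \<le> r + 1" using mj inv1 by linarith
        then have "2 * mu j * norm x \<le> 2 * (r + 1) * norm x"
          by (intro mult_right_mono) auto
        then have "2 * mu j * norm x / (real j + 1) \<le> 2 * (r + 1) * norm x / (real j + 1)"
          by (rule divide_right_mono) (use j0 in simp)
        then show ?thesis using gT[of j x] by (rule order_trans[rotated])
      qed
      have t2: "\<bar>mu j * g j x - r * g j x\<bar> \<le> norm x / (real j + 1)"
      proof -
        have "\<bar>mu j * g j x - r * g j x\<bar> = \<bar>mu j - r\<bar> * \<bar>g j x\<bar>" by (simp add: left_diff_distrib[symmetric] abs_mult)
        also have "\<dots> \<le> (1 / (real j + 1)) * norm x"
          by (rule mult_mono) (use mj gb[of j x] in auto)
        finally show ?thesis by simp
      qed
      have t3: "\<bar>r * g j x - r * \<phi> x\<bar> \<le> r * \<eta>"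
        using j1 r0 by (simp add: right_diff_distrib[symmetric] abs_mult mult_left_mono)
      have Ksplit: "K / (real j + 1) = 2 * (r + 1) * norm x / (real j + 1) + norm x / (real j + 1)"
      proof -
        have "K = 2 * (r + 1) * norm x + norm x" by (simp add: K_def algebra_simps)
        then show ?thesis by (simp add: add_divide_distrib)
      qed
      have fin1: "\<bar>\<phi> (blinfun_apply T x) - r * \<phi> x\<bar> \<le> \<eta> + r * \<eta> + K / (real j + 1)"
        unfolding Ksplit using j2 t1 t2 t3 by linarith
      have fin2: "\<eta> + r * \<eta> = e / 2"
      proof -
        have ne: "1 + r \<noteq> 0" using r0 by linarith
        have "\<eta> + r * \<eta> = \<eta> * (1 + r)" by (simp add: algebra_simps)
        also have "\<dots> = e / 2"
        proof -
          have ne2: "2 + 2 * r \<noteq> 0" using r0 by linarith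
          have ne3: "2 * (1 + r) \<noteq> 0" using ne by simp
          show ?thesis using ne ne2 ne3 by (simp add: \<eta>_def field_simps)
        qed
        finally show ?thesis .
      qed
      have fin3: "K / (real j + 1) \<le> e / 2"
      proof -
        have "real N \<le> real j" using jN by simp
        then have "2 * K / e < real j + 1" using N by linarith
        then have h: "2 * K < (real j + 1) * e" by (simp add: pos_divide_less_eq[OF e])
        have h2: "e / 2 * (real j + 1) = ((real j + 1) * e) / 2" by simp
        have "K \<le> e / 2 * (real j + 1)" unfolding h2 using h by linarith
        then show ?thesis by (simp add: pos_divide_le_eq[OF j0])
      qed
      show "\<bar>\<phi> (blinfun_apply T x) - r * \<phi> x\<bar> \<le> e" using fin1 fin2 fin3 by linarith
    qed
    then show ?thesis by simp
  qed
  show ?thesis by (rule state_to_eig[OF bl pnn pone pev])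
qed

theorem lemma2:
  fixes T :: "linf \<Rightarrow>\<^sub>L linf"
  assumes "positive_op T"
  shows "Delta_eig T \<noteq> {} \<and> closedin weak_star_topology (Delta_eig T)"
proof
  show "Delta_eig T \<noteq> {}"
  proof (cases "\<forall>n. apply_bcontfun (blinfun_apply T one) n = 0")
    case True then show ?thesis using case_zero[OF assms] by blast
  next
    case False then show ?thesis using case_nz[OF assms] by blast
  qed
  show "closedin weak_star_topology (Delta_eig T)" by (rule closed_part)
qed

end
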